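(* For every $n\ge 1$, no orientation $\overrightarrow{K_{1,n}}$ of the star $K_{1,n}$ is $\{2\}$-antimagic.
   Context: An oriented graph $\overrightarrow{G}$ is a directed graph obtained from a simple undirected graph by giving each edge one direction. For vertices $u,v$, $d(u,v)$ is the length of a shortest directed path from $u$ to $v$ ($d(u,u)=0$, and $d(u,v)=\infty$ if there is no such path). Let $\partial=\max\{d(u,v)<\infty : u,v\in V(\overrightarrow{G})\}$. A distance set is a nonempty $D\subseteq\{0,1,\dots,\partial\}$. The $D$-neighborhood of $u$ is $N_D(u)=\{v : d(u,v)\in D\}$. For a bijection $f:V(\overrightarrow{G})\to\{1,\dots,|V(\overrightarrow{G})|\}$, the $D$-weight of $u$ is $\omega_D(u)=\sum_{v\in N_D(u)} f(v)$ (empty sum $=0$). $\overrightarrow{G}$ is $D$-antimagic if $D\subseteq\{0,\dots,\partial\}$ and there is such a bijection $f$ with all $D$-weights pairwise distinct. *)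

theory Defs
  imports Main
begin

definition is_star :: "'a set \<Rightarrow> 'a set set \<Rightarrow> nat \<Rightarrow> bool" where
  "is_star V E n \<longleftrightarrow> finite V \<and> card V = n + 1 \<and>
     (\<exists>c\<in>V. E = {{c, v} | v. v \<in> V - {c}})"

definition oriented_graph :: "'a set \<Rightarrow> ('a \<times> 'a) set \<Rightarrow> bool" where
  "oriented_graph V A \<longleftrightarrow> finite V \<and> A \<subseteq> V \<times> V \<and>
     (\<forall>u v. (u, v) \<in> A \<longrightarrow> u \<noteq> v \<and> (v, u) \<notin> A)"

definition orientation_of :: "'a set \<Rightarrow> ('a \<times> 'a) set \<Rightarrow> 'a set set \<Rightarrow> bool" where
  "orientation_of V A E \<longleftrightarrow> oriented_graph V A \<and> E = {{u, v} | u v. (u, v) \<in> A}"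

text \<open>d(u,v): length of a shortest directed path (= shortest directed walk) from u to v;
  meaningful only when v is reachable from u, i.e. (u,v) in A^*.\<close>
definition dist :: "('a \<times> 'a) set \<Rightarrow> 'a \<Rightarrow> 'a \<Rightarrow> nat" where
  "dist A u v = (LEAST k. (u, v) \<in> A ^^ k)"

definition max_dist :: "'a set \<Rightarrow> ('a \<times> 'a) set \<Rightarrow> nat" where
  "max_dist V A = Max {dist A u v | u v. u \<in> V \<and> v \<in> V \<and> (u, v) \<in> A\<^sup>*}"

definition D_nbhd :: "'a set \<Rightarrow> ('a \<times> 'a) set \<Rightarrow> nat set \<Rightarrow> 'a \<Rightarrow> 'a set" where
  "D_nbhd V A D u = {v \<in> V. (u, v) \<in> A\<^sup>* \<and> dist A u v \<in> D}"

definition D_weight :: "'a set \<Rightarrow> ('a \<times> 'a) set \<Rightarrow> nat set \<Rightarrow> ('a \<Rightarrow> nat) \<Rightarrow> 'a \<Rightarrow> nat" where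
  "D_weight V A D f u = (\<Sum>v\<in>D_nbhd V A D u. f v)"

definition D_antimagic :: "'a set \<Rightarrow> ('a \<times> 'a) set \<Rightarrow> nat set \<Rightarrow> bool" where
  "D_antimagic V A D \<longleftrightarrow> D \<noteq> {} \<and> D \<subseteq> {0..max_dist V A} \<and>
     (\<exists>f. bij_betw f V {1..card V} \<and> inj_on (D_weight V A D f) V)"

end

theory Submission
  imports Defs
begin

lemma weight_zero:
  assumes "\<And>x v. (u, x) \<in> A \<Longrightarrow> (x, v) \<in> A \<Longrightarrow> False"
  shows "D_weight V A {2} f u = 0"
proof -
  have "D_nbhd V A {2} u = {}"
  proof (rule ccontr)
    assume "D_nbhd V A {2} u \<noteq> {}"
    then obtain v where v: "(u, v) \<in> A\<^sup>*" "dist A u v = 2"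
      unfolding D_nbhd_def by auto
    from v(1) obtain k where "(u, v) \<in> A ^^ k" using rtrancl_power by blast
    then have "(u, v) \<in> A ^^ (LEAST k. (u, v) \<in> A ^^ k)" by (rule LeastI)
    with v(2) have "(u, v) \<in> A ^^ 2" unfolding dist_def by simp
    then obtain x where "(u, x) \<in> A" "(x, v) \<in> A"
      by (auto simp: numeral_2_eq_2)
    with assms show False by blast
  qed
  then show ?thesis unfolding D_weight_def by simp
qed

theorem mainTheorem3:
  fixes V :: "'a set" and E :: "'a set set" and A :: "('a \<times> 'a) set" and n :: nat
  assumes "n \<ge> 1"
    and "is_star V E n"
    and "orientation_of V A E"
  shows "\<not> D_antimagic V A {2}"
proof
  assume am: "D_antimagic V A {2}"
  from assms(2) obtain c where c: "c \<in> V" "E = {{c, v} | v. v \<in> V - {c}}"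
    and fin: "finite V" and cardV: "card V = n + 1" unfolding is_star_def by blast
  have og: "A \<subseteq> V \<times> V" "\<And>u v. (u, v) \<in> A \<Longrightarrow> u \<noteq> v \<and> (v, u) \<notin> A"
    and EA: "E = {{u, v} | u v. (u, v) \<in> A}"
    using assms(3) unfolding orientation_of_def oriented_graph_def by blast+
  have arc: "u = c \<or> v = c" if "(u, v) \<in> A" for u v
  proof -
    have "{u, v} \<in> E" using EA that by blast
    then obtain w where "{u, v} = {c, w}" using c(2) by blast
    then show ?thesis by (metis doubleton_eq_iff)
  qed
  have nc: "\<And>x v. (c, x) \<in> A \<Longrightarrow> (x, v) \<in> A \<Longrightarrow> False"
    by (metis arc og(2))
  obtain l where l: "l \<in> V" "l \<noteq> c" "\<And>x v. (l, x) \<in> A \<Longrightarrow> (x, v) \<in> A \<Longrightarrow> False"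
  proof (cases "\<exists>l. (c, l) \<in> A")
    case True
    then obtain l where "(c, l) \<in> A" by blast
    then show ?thesis using that og arc by (metis SigmaD2 subsetD)
  next
    case False
    have "card (V - {c}) = n" using cardV c(1) fin by simp
    then have "V - {c} \<noteq> {}" using assms(1) by (metis card.empty not_one_le_zero)
    then obtain l where "l \<in> V" "l \<noteq> c" by blast
    then show ?thesis using that False arc by metis
  qed
  from am obtain f where inj: "inj_on (D_weight V A {2} f) V"
    unfolding D_antimagic_def by blast
  have "D_weight V A {2} f c = D_weight V A {2} f l"
    using weight_zero[of c A V f] weight_zero[of l A V f] nc l(3) by metis
  with inj c(1) l(1,2) show False unfolding inj_on_def by metis
qed

end
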